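(* Let $X_1$, $X_2$ and $Y$ be real Banach spaces, let $A$ be a separable subset of $X_1\oplus_\infty X_2$, and let $\Delta:S_{X_1\oplus_\infty X_2}\to S_Y$ be a surjective isometry. Then there exist separable subspaces $M_1\subseteq X_1$, $M_2\subseteq X_2$ and $N\subseteq Y$ such that $A\subseteq M_1\oplus_\infty M_2$ and $\Delta(S_{M_1\oplus_\infty M_2})=S_N$.
   Context: $X_1\oplus_\infty X_2$ is $X_1\times X_2$ with norm $\|(x_1,x_2)\|=\max\{\|x_1\|,\|x_2\|\}$; $S_E$ denotes the unit sphere of a normed space $E$. *)

theory Defs
  imports "HOL-Analysis.Analysis"
begin

text \<open>The space X1 (+)_inf X2 is modelled on the product type 'a \<times> 'b, but with the
  max-norm made explicit (the library's product norm is the Euclidean one).\<close>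

definition supnorm :: "('a::real_normed_vector) \<times> ('b::real_normed_vector) \<Rightarrow> real" where
  "supnorm z = max (norm (fst z)) (norm (snd z))"

definition supsphere :: "'a::real_normed_vector set \<Rightarrow> 'b::real_normed_vector set \<Rightarrow> ('a \<times> 'b) set" where
  "supsphere M1 M2 = {z. fst z \<in> M1 \<and> snd z \<in> M2 \<and> supnorm z = 1}"

definition usphere :: "'c::real_normed_vector set \<Rightarrow> 'c set" where
  "usphere N = {y \<in> N. norm y = 1}"

definition separable_set :: "'c::real_normed_vector set \<Rightarrow> bool" where
  "separable_set A \<longleftrightarrow> (\<exists>D. countable D \<and> D \<subseteq> A \<and>
     (\<forall>a\<in>A. \<forall>e>0. \<exists>d\<in>D. norm (a - d) < e))"

definition sup_separable :: "('a::real_normed_vector \<times> 'b::real_normed_vector) set \<Rightarrow> bool" where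
  "sup_separable A \<longleftrightarrow> (\<exists>D. countable D \<and> D \<subseteq> A \<and>
     (\<forall>a\<in>A. \<forall>e>0. \<exists>d\<in>D. supnorm (a - d) < e))"

definition closed_subspace :: "'c::real_normed_vector set \<Rightarrow> bool" where
  "closed_subspace M \<longleftrightarrow> subspace M \<and> closed M"

end

theory Submission
  imports Defs
begin

definition qspan :: "'v::real_normed_vector set \<Rightarrow> 'v set" where
  "qspan C = (\<lambda>xs. sum_list (map (\<lambda>(q,c). real_of_rat q *\<^sub>R c) xs)) ` lists (UNIV \<times> C)"

lemma qspan_countable: "countable C \<Longrightarrow> countable (qspan C)"
  unfolding qspan_def by (intro countable_image countable_lists countable_SIGMA) auto

lemma qspan_mono: "C \<subseteq> D \<Longrightarrow> qspan C \<subseteq> qspan D"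
  unfolding qspan_def by (rule image_mono) (auto intro: lists_mono)

lemma qspan_base: "C \<subseteq> qspan C"
proof
  fix c assume "c \<in> C"
  then have "[(1::rat, c)] \<in> lists (UNIV \<times> C)" by auto
  then show "c \<in> qspan C" unfolding qspan_def by (intro image_eqI[where x="[(1::rat, c)]"]) auto
qed

lemma qspan_zero: "0 \<in> qspan C"
  unfolding qspan_def by (rule image_eqI[where x="[]"]) auto

lemma qspan_add: "x \<in> qspan C \<Longrightarrow> y \<in> qspan C \<Longrightarrow> x + y \<in> qspan C"
  unfolding qspan_def by (auto intro!: image_eqI[where x="_ @ _"])

lemma qspan_scale: "x \<in> qspan C \<Longrightarrow> real_of_rat r *\<^sub>R x \<in> qspan C"
proof -
  assume "x \<in> qspan C"
  then obtain xs where xs: "xs \<in> lists (UNIV \<times> C)"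
    and x: "x = sum_list (map (\<lambda>(q,c). real_of_rat q *\<^sub>R c) xs)"
    unfolding qspan_def by auto
  let ?ys = "map (\<lambda>(q,c). (r*q, c)) xs"
  have "?ys \<in> lists (UNIV \<times> C)" using xs by auto
  moreover have "real_of_rat r *\<^sub>R x = sum_list (map (\<lambda>(q,c). real_of_rat q *\<^sub>R c) ?ys)"
    unfolding x by (induction xs) (auto simp: scaleR_add_right of_rat_mult)
  ultimately show ?thesis unfolding qspan_def by blast
qed

lemma lists_chain:
  assumes "incseq C" shows "xs \<in> lists (UNIV \<times> (\<Union>n. C n)) \<Longrightarrow> \<exists>n. xs \<in> lists (UNIV \<times> C n)"
proof (induction xs)
  case Nil then show ?case by auto
next
  case (Cons a xs)
  then obtain n where n: "xs \<in> lists (UNIV \<times> C n)" by auto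
  have "snd a \<in> (\<Union>n. C n)" using Cons.prems by (cases a) auto
  then obtain m where m: "snd a \<in> C m" by auto
  have "C n \<subseteq> C (max n m)" "C m \<subseteq> C (max n m)" using assms by (auto simp: incseq_def)
  then have "a # xs \<in> lists (UNIV \<times> C (max n m))" using n m by (cases a) auto
  then show ?case by blast
qed

lemma qspan_chain:
  assumes "incseq C"
  shows "qspan (\<Union>n. C n) \<subseteq> (\<Union>n. qspan (C n))"
proof
  fix x assume "x \<in> qspan (\<Union>n. C n)"
  then obtain xs where xs: "xs \<in> lists (UNIV \<times> (\<Union>n. C n))"
    and x: "x = sum_list (map (\<lambda>(q,c). real_of_rat q *\<^sub>R c) xs)"
    unfolding qspan_def by auto
  have "\<exists>n. xs \<in> lists (UNIV \<times> C n)" using lists_chain[OF assms xs] .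
  then show "x \<in> (\<Union>n. qspan (C n))" unfolding qspan_def x by blast
qed

lemma closure_qspan_subspace: "subspace (closure (qspan C))"
proof -
  let ?Q = "closure (qspan C)"
  have add: "x + y \<in> ?Q" if "x \<in> ?Q" "y \<in> ?Q" for x y
  proof -
    have "(\<lambda>y. q + y) ` ?Q \<subseteq> ?Q" if "q \<in> qspan C" for q
      by (rule image_closure_subset) (auto intro: continuous_intros closure_subset[THEN subsetD] qspan_add that)
    then have "(\<lambda>y. y + x) ` qspan C \<subseteq> ?Q" using that(1) by (auto simp: add.commute)
    then have "(\<lambda>y. y + x) ` ?Q \<subseteq> ?Q"
      by (intro image_closure_subset) (auto intro: continuous_intros)
    then show ?thesis using that(2) by auto
  qed
  have scal: "c *\<^sub>R x \<in> ?Q" if "x \<in> ?Q" for x c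
  proof -
    have "(\<lambda>y. real_of_rat r *\<^sub>R y) ` ?Q \<subseteq> ?Q" for r
      by (rule image_closure_subset) (auto intro: continuous_intros closure_subset[THEN subsetD] qspan_scale)
    then have "(\<lambda>c. c *\<^sub>R x) ` \<rat> \<subseteq> ?Q" using that by (auto elim!: Rats_cases)
    then have "(\<lambda>c. c *\<^sub>R x) ` closure \<rat> \<subseteq> ?Q"
      by (intro image_closure_subset) (auto intro: continuous_intros)
    then show ?thesis by (auto simp: Rats_closure_real)
  qed
  show ?thesis unfolding subspace_def
    using add scal qspan_zero closure_subset by blast
qed

lemma closure_qspan_sep: "countable C \<Longrightarrow> separable_set (closure (qspan C))"
  unfolding separable_set_def
  by (rule exI[where x="qspan C"]) (auto simp: qspan_countable closure_subset dest!: closure_approachableD simp: dist_norm)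

lemma normalize_approx:
  fixes f :: "'v::real_vector \<Rightarrow> real"
  assumes tri: "\<And>x y. f (x+y) \<le> f x + f y" and hom: "\<And>c x. f (c *\<^sub>R x) = \<bar>c\<bar> * f x"
    and z: "f z = 1" and e: "0 < e" and approx: "\<forall>d>0. \<exists>w\<in>W. f (z - w) < d"
  shows "\<exists>w\<in>W. f w \<noteq> 0 \<and> f (z - w /\<^sub>R f w) < e"
proof -
  obtain w where w: "w \<in> W" "f (z - w) < min (e/2) (1/2)"
    using approx e by (metis half_gt_zero min_less_iff_conj zero_less_one)
  have sym: "f (w - z) = f (z - w)" using hom[of "-1" "z - w"] by simp
  have "f z \<le> f (z - w) + f w" using tri[of "z - w" w] by simp
  moreover have "f w \<le> f (w - z) + f z" using tri[of "w - z" z] by simp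
  ultimately have b: "\<bar>f w - 1\<bar> \<le> f (z - w)" "f w > 0" using z sym w(2) by auto
  have eq: "z - w /\<^sub>R f w = (z - w) + (1 - 1 / f w) *\<^sub>R w"
    by (simp add: algebra_simps divide_inverse)
  have "\<bar>1 - 1 / f w\<bar> * f w = \<bar>f w - 1\<bar>" using b(2)
    by (simp add: abs_mult[symmetric] field_simps abs_minus_commute)
  then have "f (z - w /\<^sub>R f w) \<le> f (z - w) + \<bar>f w - 1\<bar>"
    using tri[of "z - w" "(1 - 1 / f w) *\<^sub>R w"] hom[of "1 - 1 / f w" w] unfolding eq by simp
  also have "\<dots> < e" using b(1) w(2) by linarith
  finally show ?thesis using w(1) b(2) by force
qed

lemma supnorm_tri: "supnorm (x + y) \<le> supnorm x + supnorm y"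
  unfolding supnorm_def using norm_triangle_ineq[of "fst x" "fst y"] norm_triangle_ineq[of "snd x" "snd y"]
  by (auto simp: max_def)

lemma supnorm_hom: "supnorm (c *\<^sub>R x) = \<bar>c\<bar> * supnorm x"
  unfolding supnorm_def by (simp add: max_mult_distrib_left)

lemma supnorm_fst: "norm (fst x) \<le> supnorm x" and supnorm_snd: "norm (snd x) \<le> supnorm x"
  unfolding supnorm_def by auto

lemma supnorm_normalize: "supnorm w \<noteq> 0 \<Longrightarrow> supnorm (w /\<^sub>R supnorm w) = 1"
proof -
  assume "supnorm w \<noteq> 0"
  moreover have "supnorm w \<ge> 0" by (simp add: supnorm_def le_max_iff_disj)
  ultimately show ?thesis using supnorm_hom[of "inverse (supnorm w)" w] by simp
qed

lemma dist_fst_le: "dist (fst x) (fst a) \<le> supnorm (a - x)"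
  using supnorm_fst[of "a - x"] by (simp add: dist_norm norm_minus_commute)

lemma dist_snd_le: "dist (snd x) (snd a) \<le> supnorm (a - x)"
  using supnorm_snd[of "a - x"] by (simp add: dist_norm norm_minus_commute)

theorem lemma3p4:
  fixes A :: "('a::banach \<times> 'b::banach) set"
    and \<Delta> :: "'a \<times> 'b \<Rightarrow> 'c::banach"
  assumes "sup_separable A"
    and "\<Delta> ` supsphere UNIV UNIV = usphere UNIV"
    and "\<forall>u\<in>supsphere UNIV UNIV. \<forall>v\<in>supsphere UNIV UNIV.
           norm (\<Delta> u - \<Delta> v) = supnorm (u - v)"
  shows "\<exists>M1 M2 N. closed_subspace M1 \<and> closed_subspace M2 \<and> closed_subspace N \<and>
           separable_set M1 \<and> separable_set M2 \<and> separable_set N \<and>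
           A \<subseteq> M1 \<times> M2 \<and> \<Delta> ` supsphere M1 M2 = usphere N"
proof -
  define S where "S = supsphere (UNIV::'a set) (UNIV::'b set)"
  have surj: "\<Delta> ` S = usphere UNIV" using assms(2) S_def by simp
  have iso: "\<And>u v. u \<in> S \<Longrightarrow> v \<in> S \<Longrightarrow> norm (\<Delta> u - \<Delta> v) = supnorm (u - v)"
    using assms(3) S_def by simp
  define G where "G = inv_into S \<Delta>"
  have G: "G y \<in> S" "\<Delta> (G y) = y" if "y \<in> usphere UNIV" for y
    using that surj unfolding G_def by (auto intro: inv_into_into f_inv_into_f)
  obtain D0 where D0: "countable D0" "D0 \<subseteq> A" "\<And>a e. a \<in> A \<Longrightarrow> e > 0 \<Longrightarrow> \<exists>d\<in>D0. supnorm (a - d) < e"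
    using assms(1) unfolding sup_separable_def by blast
  define Pset :: "'a set \<Rightarrow> 'b set \<Rightarrow> ('a \<times> 'b) set" where
    "Pset = (\<lambda>C1 C2. (\<lambda>w. w /\<^sub>R supnorm w) ` {w \<in> qspan C1 \<times> qspan C2. supnorm w \<noteq> 0})"
  define Rset :: "'c set \<Rightarrow> 'c set" where
    "Rset = (\<lambda>D. (\<lambda>w. w /\<^sub>R norm w) ` {w \<in> qspan D. w \<noteq> 0})"
  define step where "step = (\<lambda>(C1, C2, D). (C1 \<union> fst ` G ` Rset D, C2 \<union> snd ` G ` Rset D, D \<union> \<Delta> ` Pset C1 C2))"
  define sq where "sq n = (step ^^ n) (fst ` D0, snd ` D0, {})" for n
  define c1 where "c1 n = fst (sq n)" for n
  define c2 where "c2 n = fst (snd (sq n))" for n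
  define d where "d n = snd (snd (sq n))" for n
  have c1S: "c1 (Suc n) = c1 n \<union> fst ` G ` Rset (d n)"
   and c2S: "c2 (Suc n) = c2 n \<union> snd ` G ` Rset (d n)"
   and dS: "d (Suc n) = d n \<union> \<Delta> ` Pset (c1 n) (c2 n)" for n
    unfolding c1_def c2_def d_def sq_def by (auto simp: step_def split: prod.splits)
  have c0: "c1 0 = fst ` D0" "c2 0 = snd ` D0"
    unfolding c1_def c2_def sq_def by auto
  have cnt: "countable (c1 n) \<and> countable (c2 n) \<and> countable (d n)" for n
  proof (induction n)
    case 0 then show ?case using D0(1) c0 by (simp add: d_def sq_def)
  next
    case (Suc n) then show ?case
      by (simp add: c1S c2S dS Pset_def Rset_def qspan_countable)
  qed
  have inc: "incseq c1" "incseq c2" "incseq d"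
    by (auto intro!: incseq_SucI simp: c1S c2S dS)
  define C1 where "C1 = (\<Union>n. c1 n)"
  define C2 where "C2 = (\<Union>n. c2 n)"
  define D where "D = (\<Union>n. d n)"
  have cC: "countable C1" "countable C2" "countable D"
    using cnt by (auto simp: C1_def C2_def D_def)
  define M1 where "M1 = closure (qspan C1)"
  define M2 where "M2 = closure (qspan C2)"
  define N where "N = closure (qspan D)"
  have PS: "Pset X Y \<subseteq> S" for X Y
    unfolding Pset_def S_def supsphere_def using supnorm_normalize by blast
  have RS: "Rset X \<subseteq> usphere UNIV" for X
    by (auto simp: Rset_def usphere_def)
  have Pchain: "Pset C1 C2 \<subseteq> (\<Union>n. Pset (c1 n) (c2 n))"
  proof
    fix p assume "p \<in> Pset C1 C2"
    then obtain w where w: "fst w \<in> qspan C1" "snd w \<in> qspan C2" "supnorm w \<noteq> 0" "p = w /\<^sub>R supnorm w"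
      unfolding Pset_def by auto
    obtain n m where "fst w \<in> qspan (c1 n)" "snd w \<in> qspan (c2 m)"
      using w(1,2) qspan_chain[OF inc(1)] qspan_chain[OF inc(2)] unfolding C1_def C2_def by blast
    then have "fst w \<in> qspan (c1 (max n m))" "snd w \<in> qspan (c2 (max n m))"
      using qspan_mono inc(1,2) by (metis incseqD max.cobounded1 max.cobounded2 subsetD)+
    then have "w \<in> {w \<in> qspan (c1 (max n m)) \<times> qspan (c2 (max n m)). supnorm w \<noteq> 0}"
      using w(3) by (simp add: mem_Times_iff)
    then have "p \<in> Pset (c1 (max n m)) (c2 (max n m))" using w(4) unfolding Pset_def by blast
    then show "p \<in> (\<Union>n. Pset (c1 n) (c2 n))" by blast
  qed
  have Rchain: "Rset D \<subseteq> (\<Union>n. Rset (d n))"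
  proof
    fix r assume "r \<in> Rset D"
    then obtain w where w: "w \<in> qspan D" "w \<noteq> 0" "r = w /\<^sub>R norm w" unfolding Rset_def by auto
    then obtain n where "w \<in> qspan (d n)" using qspan_chain[OF inc(3)] unfolding D_def by blast
    then have "r \<in> Rset (d n)" using w unfolding Rset_def by blast
    then show "r \<in> (\<Union>n. Rset (d n))" by blast
  qed
  have "Rset D \<subseteq> usphere UNIV" by (rule RS)
  show ?thesis
  proof (intro exI conjI)
    show "closed_subspace M1" "closed_subspace M2" "closed_subspace N"
      unfolding closed_subspace_def M1_def M2_def N_def by (auto simp: closure_qspan_subspace)
    show "separable_set M1" "separable_set M2" "separable_set N"
      unfolding M1_def M2_def N_def using cC by (auto intro: closure_qspan_sep)
    show "A \<subseteq> M1 \<times> M2"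
    proof
      fix a assume a: "a \<in> A"
      have "fst a \<in> M1" unfolding M1_def closure_approachable
      proof (intro allI impI)
        fix e :: real assume "e > 0"
        then obtain x where "x \<in> D0" "supnorm (a - x) < e" using D0(3) a by blast
        moreover have "fst x \<in> c1 0" using \<open>x \<in> D0\<close> c0 by simp
        then have "fst x \<in> C1" unfolding C1_def by blast
        then have "fst x \<in> qspan C1" using qspan_base by blast
        ultimately show "\<exists>y\<in>qspan C1. dist y (fst a) < e"
          using dist_fst_le[of x a] by (intro bexI[where x="fst x"]) auto
      qed
      moreover have "snd a \<in> M2" unfolding M2_def closure_approachable
      proof (intro allI impI)
        fix e :: real assume "e > 0"
        then obtain x where "x \<in> D0" "supnorm (a - x) < e" using D0(3) a by blast
        moreover have "snd x \<in> c2 0" using \<open>x \<in> D0\<close> c0 by simp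
        then have "snd x \<in> C2" unfolding C2_def by blast
        then have "snd x \<in> qspan C2" using qspan_base by blast
        ultimately show "\<exists>y\<in>qspan C2. dist y (snd a) < e"
          using dist_snd_le[of x a] by (intro bexI[where x="snd x"]) auto
      qed
      ultimately show "a \<in> M1 \<times> M2" by (simp add: mem_Times_iff)
    qed
    show "\<Delta> ` supsphere M1 M2 = usphere N"
    proof
      show "\<Delta> ` supsphere M1 M2 \<subseteq> usphere N"
      proof
        fix y assume "y \<in> \<Delta> ` supsphere M1 M2"
        then obtain z where z: "z \<in> supsphere M1 M2" "y = \<Delta> z" by auto
        have zS: "z \<in> S" using z(1) by (simp add: S_def supsphere_def)
        then have ny: "norm y = 1" using surj z(2) by (auto simp: usphere_def)
        have approx: "\<forall>e>0. \<exists>w\<in>qspan C1 \<times> qspan C2. supnorm (z - w) < e"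
        proof (intro allI impI)
          fix e :: real assume e: "e > 0"
          have "fst z \<in> M1" "snd z \<in> M2" using z(1) by (auto simp: supsphere_def)
          then obtain u v where "u \<in> qspan C1" "dist (fst z) u < e" "v \<in> qspan C2" "dist (snd z) v < e"
            unfolding M1_def M2_def using e by (meson closure_approachableD)
          then show "\<exists>w\<in>qspan C1 \<times> qspan C2. supnorm (z - w) < e"
            by (intro bexI[where x="(u,v)"]) (auto simp: supnorm_def dist_norm)
        qed
        have "y \<in> N" unfolding N_def closure_approachable
        proof (intro allI impI)
          fix e :: real assume e: "e > 0"
          have z1: "supnorm z = 1" using z(1) by (simp add: supsphere_def)
          obtain w where w: "w \<in> qspan C1 \<times> qspan C2" "supnorm w \<noteq> 0" "supnorm (z - w /\<^sub>R supnorm w) < e"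
            using normalize_approx[of supnorm z e "qspan C1 \<times> qspan C2", OF supnorm_tri supnorm_hom z1 e approx]
            by blast
          define p where "p = w /\<^sub>R supnorm w"
          have "p \<in> Pset C1 C2" using w unfolding Pset_def p_def by auto
          then obtain n where "p \<in> Pset (c1 n) (c2 n)" using Pchain by blast
          then have "\<Delta> p \<in> d (Suc n)" by (simp add: dS)
          then have "\<Delta> p \<in> D" unfolding D_def by blast
          then have "\<Delta> p \<in> qspan D" using qspan_base by blast
          moreover have "p \<in> S" using PS \<open>p \<in> Pset C1 C2\<close> by blast
          ultimately show "\<exists>x\<in>qspan D. dist x y < e"
            using iso[OF \<open>p \<in> S\<close> zS] w(3) z(2) supnorm_hom[of "-1" "z - p"]
            by (intro bexI[where x="\<Delta> p"]) (auto simp: dist_norm p_def)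
        qed
        then show "y \<in> usphere N" using ny by (simp add: usphere_def)
      qed
      show "usphere N \<subseteq> \<Delta> ` supsphere M1 M2"
      proof
        fix y assume y: "y \<in> usphere N"
        then have yU: "y \<in> usphere UNIV" by (simp add: usphere_def)
        then obtain z where zS: "z \<in> S" and yz: "y = \<Delta> z" using surj by blast
        have approx: "\<forall>e>0. \<exists>w\<in>qspan D. norm (y - w) < e"
        proof (intro allI impI)
          fix e :: real assume "e > 0"
          have "y \<in> closure (qspan D)" using y unfolding usphere_def N_def by blast
          then obtain w where "w \<in> qspan D" "dist y w < e" using closure_approachableD \<open>e > 0\<close> by blast
          then show "\<exists>w\<in>qspan D. norm (y - w) < e" by (auto simp: dist_norm)
        qed
        have key: "\<exists>g\<in>S. fst g \<in> qspan C1 \<and> snd g \<in> qspan C2 \<and> supnorm (z - g) < e" if e: "e > 0" for e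
        proof -
          have "norm y = 1" using yU by (simp add: usphere_def)
          then obtain w where w: "w \<in> qspan D" "norm w \<noteq> 0" "norm (y - w /\<^sub>R norm w) < e"
            using normalize_approx[of norm y e "qspan D", OF norm_triangle_ineq _ _ e approx] by auto
          define r where "r = w /\<^sub>R norm w"
          have "r \<in> Rset D" using w unfolding Rset_def r_def by auto
          then obtain n where rn: "r \<in> Rset (d n)" using Rchain by blast
          have rU: "r \<in> usphere UNIV" using RS rn by blast
          have "fst (G r) \<in> c1 (Suc n)" "snd (G r) \<in> c2 (Suc n)" using rn by (auto simp: c1S c2S)
          then have "fst (G r) \<in> C1" "snd (G r) \<in> C2"
            unfolding C1_def C2_def by blast+
          then have "fst (G r) \<in> qspan C1" "snd (G r) \<in> qspan C2"
            using qspan_base by blast+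
          moreover have "supnorm (z - G r) = norm (y - r)"
            using iso[OF zS G(1)[OF rU]] G(2)[OF rU] yz by simp
          ultimately show ?thesis using G(1)[OF rU] w(3) r_def by auto
        qed
        have "fst z \<in> M1" unfolding M1_def closure_approachable
        proof (intro allI impI)
          fix e :: real assume "e > 0"
          then obtain g where "fst g \<in> qspan C1" "supnorm (z - g) < e" using key by blast
          then show "\<exists>x\<in>qspan C1. dist x (fst z) < e"
            using dist_fst_le[of g z] by (intro bexI[where x="fst g"]) auto
        qed
        moreover have "snd z \<in> M2" unfolding M2_def closure_approachable
        proof (intro allI impI)
          fix e :: real assume "e > 0"
          then obtain g where "snd g \<in> qspan C2" "supnorm (z - g) < e" using key by blast
          then show "\<exists>x\<in>qspan C2. dist x (snd z) < e"
            using dist_snd_le[of g z] by (intro bexI[where x="snd g"]) auto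
        qed
        ultimately have "z \<in> supsphere M1 M2" using zS by (simp add: S_def supsphere_def)
        then show "y \<in> \<Delta> ` supsphere M1 M2" using yz by blast
      qed
    qed
  qed
qed

end
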